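(* Let $K$ be a number field, let $X\subseteq M_d(K)$ be closed in the linear Zariski topology, and let $\mathcal S=\langle X\rangle$. Let $A\in\mathcal S$ be completely pseudo-regular and $B\in[A]_{\mathcal S}$. (1) There exist completely pseudo-regular $C,D\in[A]_{\mathcal S}$ such that $B=E(D)B$ and $B=BE(C)$. (2) Suppose $B=B_1B_2$ with $B_1,B_2\in\mathcal S$. Then there exists a completely pseudo-regular element $C\in[A]_{\mathcal S}$ such that $B_1B_2=B_1E(C)B_2$.
   Context: The linear Zariski topology on $M_d(K)$ has as closed sets the finite unions of vector subspaces; $\langle X\rangle$ is the subsemigroup of $M_d(K)$ generated by $X$. A matrix $C$ is completely pseudo-regular if it lies in a subgroup of the multiplicative semigroup $M_d(K)$ (equivalently $\operatorname{im} C\cap\ker C=0$); then $E(C)$ denotes the unique idempotent matrix with $\operatorname{im}E(C)=\operatorname{im}C$ and $\ker E(C)=\ker C$ (the identity of any subgroup containing $C$). For $P,Q\in M_d(K)$ write $P\parallel Q$ if $\operatorname{im}P=\operatorname{im}Q$ and $\ker P=\ker Q$. For $P,Q\in\mathcal S$, write $P\sim_{\mathcal S}Q$ if there exist $C,D,C',D'\in\mathcal S\cup\{I\}$ with $Q\parallel DPC$ and $P\parallel D'QC'$; this is an equivalence relation on $\mathcal S$, and $[P]_{\mathcal S}$ denotes the class of $P$. *)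

theory Defs
  imports "HOL-Analysis.Finite_Cartesian_Product"
begin

text \<open>A number field, as a field of characteristic 0 which is finite-dimensional over its
  prime field (the rationals): every element is a rational linear combination of a fixed
  finite set of elements.\<close>
definition number_field :: "'a::field_char_0 itself \<Rightarrow> bool" where
  "number_field _ \<longleftrightarrow>
     (\<exists>B::'a set. finite B \<and> (\<forall>x::'a. \<exists>c::'a \<Rightarrow> rat. x = (\<Sum>b\<in>B. of_rat (c b) * b)))"

definition msmult :: "'a::semiring_1 \<Rightarrow> 'a^'n^'n \<Rightarrow> 'a^'n^'n" where
  "msmult c M = (\<chi> i j. c * M $ i $ j)"

definition mat_subspace :: "(('a::field)^'n^'n) set \<Rightarrow> bool" where
  "mat_subspace V \<longleftrightarrow> 0 \<in> V \<and> (\<forall>P\<in>V. \<forall>Q\<in>V. P + Q \<in> V) \<and> (\<forall>c. \<forall>P\<in>V. msmult c P \<in> V)"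

definition lin_zariski_closed :: "(('a::field)^'n^'n) set \<Rightarrow> bool" where
  "lin_zariski_closed X \<longleftrightarrow> (\<exists>F. finite F \<and> (\<forall>V\<in>F. mat_subspace V) \<and> X = \<Union>F)"

inductive_set gen_semigroup :: "(('a::semiring_1)^'n^'n) set \<Rightarrow> ('a^'n^'n) set"
  for X where
    base: "P \<in> X \<Longrightarrow> P \<in> gen_semigroup X"
  | mult: "P \<in> gen_semigroup X \<Longrightarrow> Q \<in> gen_semigroup X \<Longrightarrow> P ** Q \<in> gen_semigroup X"

definition mat_im :: "('a::semiring_1)^'n^'n \<Rightarrow> ('a^'n) set" where
  "mat_im P = range (\<lambda>x. P *v x)"

definition mat_ker :: "('a::semiring_1)^'n^'n \<Rightarrow> ('a^'n) set" where
  "mat_ker P = {x. P *v x = 0}"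

definition compl_pseudo_regular :: "('a::field)^'n^'n \<Rightarrow> bool" where
  "compl_pseudo_regular C \<longleftrightarrow>
     (\<exists>G e. C \<in> G \<and> e \<in> G \<and> (\<forall>P\<in>G. \<forall>Q\<in>G. P ** Q \<in> G)
        \<and> (\<forall>P\<in>G. e ** P = P \<and> P ** e = P)
        \<and> (\<forall>P\<in>G. \<exists>Q\<in>G. P ** Q = e \<and> Q ** P = e))"

definition idem_of :: "('a::field)^'n^'n \<Rightarrow> 'a^'n^'n" where
  "idem_of C = (THE E. E ** E = E \<and> mat_im E = mat_im C \<and> mat_ker E = mat_ker C)"

definition mat_parallel :: "('a::semiring_1)^'n^'n \<Rightarrow> 'a^'n^'n \<Rightarrow> bool" where
  "mat_parallel P Q \<longleftrightarrow> mat_im P = mat_im Q \<and> mat_ker P = mat_ker Q"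

definition sim_rel :: "(('a::semiring_1)^'n^'n) set \<Rightarrow> 'a^'n^'n \<Rightarrow> 'a^'n^'n \<Rightarrow> bool" where
  "sim_rel S P Q \<longleftrightarrow> P \<in> S \<and> Q \<in> S \<and>
     (\<exists>C\<in>S \<union> {mat 1}. \<exists>D\<in>S \<union> {mat 1}. \<exists>C'\<in>S \<union> {mat 1}. \<exists>D'\<in>S \<union> {mat 1}.
        mat_parallel Q (D ** P ** C) \<and> mat_parallel P (D' ** Q ** C'))"

definition sim_class :: "(('a::semiring_1)^'n^'n) set \<Rightarrow> 'a^'n^'n \<Rightarrow> ('a^'n^'n) set" where
  "sim_class S P = {Q. sim_rel S P Q}"

end

theory Submission
  imports Defs "HOL-Analysis.Cartesian_Space"
begin

type_synonym ('a,'n) sq = "'a^'n^'n"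

lemma rassoc: "P ** Q = R \<Longrightarrow> P ** (Q ** X) = R ** X"
  by (metis matrix_mul_assoc)

lemma mr_distrib: "((A::'a::semiring_1^'n^'m) + B) ** C = A ** C + B ** C"
  by (vector matrix_matrix_mult_def sum.distrib[symmetric] field_simps)

lemma ml_diff: "(A::'a::ring_1^'n^'m) ** (B - C) = A ** B - A ** C"
  by (vector matrix_matrix_mult_def sum_subtractf[symmetric] field_simps)

lemma mr_diff: "((A::'a::ring_1^'n^'m) - B) ** C = A ** C - B ** C"
  by (vector matrix_matrix_mult_def sum_subtractf[symmetric] field_simps)

lemma corner:
  fixes e K R :: "'a::field^'n^'n"
  assumes ee: "e ** e = e" and "K ** e = K" "e ** K = K" "R ** e = R" "e ** R = R" "K ** R = e"
  shows "R ** K = e"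
proof -
  have "(K + (mat 1 - e)) ** (R + (mat 1 - e)) = mat 1"
    by (simp add: matrix_add_ldistrib mr_distrib ml_diff mr_diff assms)
  hence "(R + (mat 1 - e)) ** (K + (mat 1 - e)) = mat 1"
    using matrix_left_right_inverse by blast
  thus ?thesis
    by (simp add: matrix_add_ldistrib mr_distrib ml_diff mr_diff assms)
qed

lemma mv_axis: "((P::'a::semiring_1^'n^'m) *v axis j 1) $ i = P $ i $ j"
  by (simp add: matrix_vector_mult_def axis_def if_distrib if_distribR sum.delta cong: if_cong)

lemma factor:
  fixes P Q :: "'a::field^'n^'n"
  assumes "mat_im P \<subseteq> mat_im Q"
  shows "\<exists>N. P = Q ** N"
proof -
  have "\<And>j. P *v axis j 1 \<in> range ((*v) Q)" using assms unfolding mat_im_def by auto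
  hence "\<forall>j. \<exists>y. Q *v y = P *v axis j 1" by (metis rangeE)
  then obtain y where y: "\<And>j. Q *v y j = P *v axis j 1" by metis
  have "P = Q ** (\<chi> i j. y j $ i)"
  proof (subst vec_eq_iff, intro allI, subst vec_eq_iff, intro allI)
    fix i j
    have "(Q ** (\<chi> i j. y j $ i)) $ i $ j = (Q *v y j) $ i"
      by (simp add: matrix_matrix_mult_def matrix_vector_mult_def)
    also have "\<dots> = P $ i $ j" by (simp add: y mv_axis)
    finally show "P $ i $ j = (Q ** (\<chi> i j. y j $ i)) $ i $ j" by simp
  qed
  thus ?thesis by blast
qed


lemma cpr_D:
  fixes A :: "'a::field^'n^'n"
  assumes "compl_pseudo_regular A"
  shows "\<exists>e A'. e ** e = e \<and> e ** A = A \<and> A ** e = A \<and> A ** A' = e \<and> A' ** A = e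
            \<and> e ** A' = A' \<and> A' ** e = A'"
proof -
  obtain G e where G: "A \<in> G" "e \<in> G" "\<forall>P\<in>G. \<forall>Q\<in>G. P ** Q \<in> G"
     "\<forall>P\<in>G. e ** P = P \<and> P ** e = P" "\<forall>P\<in>G. \<exists>Q\<in>G. P ** Q = e \<and> Q ** P = e"
    using assms unfolding compl_pseudo_regular_def by blast
  obtain A' where "A' \<in> G" "A ** A' = e" "A' ** A = e" using G by blast
  thus ?thesis using G by metis
qed

lemma cpr_I:
  fixes P :: "'a::field^'n^'n"
  assumes "e ** e = e" "e ** P = P" "P ** e = P" "P ** Q = e" "Q ** P = e" "e ** Q = Q" "Q ** e = Q"
  shows "compl_pseudo_regular P"
proof -
  define G where "G = {X. e ** X = X \<and> X ** e = X \<and> (\<exists>Y. e ** Y = Y \<and> Y ** e = Y \<and> X ** Y = e \<and> Y ** X = e)}"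
  have "P \<in> G" using assms unfolding G_def by blast
  moreover have "e \<in> G" using assms unfolding G_def by blast
  moreover have "\<forall>X\<in>G. \<forall>Z\<in>G. X ** Z \<in> G"
  proof (intro ballI)
    fix X Z assume "X \<in> G" "Z \<in> G"
    then obtain Y W where X: "e ** X = X" "X ** e = X" "e ** Y = Y" "Y ** e = Y" "X ** Y = e" "Y ** X = e"
      and Z: "e ** Z = Z" "Z ** e = Z" "e ** W = W" "W ** e = W" "Z ** W = e" "W ** Z = e"
      unfolding G_def by blast
    have "X ** Z ** (W ** Y) = e" by (metis X Z matrix_mul_assoc)
    moreover have "W ** Y ** (X ** Z) = e" by (metis X Z matrix_mul_assoc)
    moreover have "e ** (X ** Z) = X ** Z" "X ** Z ** e = X ** Z" "e ** (W ** Y) = W ** Y" "W ** Y ** e = W ** Y"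
      by (metis X Z matrix_mul_assoc)+
    ultimately show "X ** Z \<in> G" unfolding G_def by blast
  qed
  moreover have "\<forall>X\<in>G. e ** X = X \<and> X ** e = X" unfolding G_def by blast
  moreover have "\<forall>X\<in>G. \<exists>Y\<in>G. X ** Y = e \<and> Y ** X = e"
  proof
    fix X assume "X \<in> G"
    then obtain Y where "e ** X = X" "X ** e = X" "e ** Y = Y" "Y ** e = Y" "X ** Y = e" "Y ** X = e"
      unfolding G_def by blast
    hence "Y \<in> G" "X ** Y = e \<and> Y ** X = e" unfolding G_def by blast+
    thus "\<exists>Y\<in>G. X ** Y = e \<and> Y ** X = e" by blast
  qed
  ultimately show ?thesis unfolding compl_pseudo_regular_def by blast
qed

lemma par_idem:
  fixes P :: "'a::field^'n^'n"
  assumes "P ** e = P" "e ** P = P" "P ** Q = e" "Q' ** P = e"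
  shows "mat_parallel P e"
proof -
  have "mat_im P \<subseteq> mat_im e"
    unfolding mat_im_def by (metis assms(2) matrix_vector_mul_assoc rangeI image_subset_iff)
  moreover have "mat_im e \<subseteq> mat_im P"
    unfolding mat_im_def by (metis assms(3) matrix_vector_mul_assoc rangeI image_subset_iff)
  moreover have "mat_ker P \<subseteq> mat_ker e"
    unfolding mat_ker_def by (auto, metis assms(4) matrix_vector_mul_assoc matrix_vector_mult_0_right)
  moreover have "mat_ker e \<subseteq> mat_ker P"
    unfolding mat_ker_def by (auto, metis assms(1) matrix_vector_mul_assoc matrix_vector_mult_0_right)
  ultimately show ?thesis unfolding mat_parallel_def by blast
qed

lemma par_props:
  fixes T e :: "'a::field^'n^'n"
  assumes "mat_parallel T e" "e ** e = e"
  shows "T ** e = T \<and> e ** T = T \<and> (\<exists>R. T ** R = e)"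
proof -
  have im: "mat_im T = mat_im e" and ker: "mat_ker T = mat_ker e"
    using assms unfolding mat_parallel_def by auto
  obtain N where N: "T = e ** N" using factor[of T e] im by auto
  have 1: "e ** T = T" using N assms(2) by (metis matrix_mul_assoc)
  have 2: "T ** e = T"
  proof -
    have "T *v x = (T ** e) *v x" for x
    proof -
      have "e *v (x - e *v x) = 0"
        by (simp add: matrix_vector_mult_diff_distrib matrix_vector_mul_assoc assms(2))
      hence "x - e *v x \<in> mat_ker T" using ker unfolding mat_ker_def by auto
      hence "T *v (x - e *v x) = 0" unfolding mat_ker_def by auto
      thus ?thesis by (simp add: matrix_vector_mult_diff_distrib matrix_vector_mul_assoc)
    qed
    thus ?thesis by (metis matrix_eq)
  qed
  obtain R where "e = T ** R" using factor[of e T] im by auto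
  thus ?thesis using 1 2 by metis
qed

lemma par_ginv:
  fixes T e :: "'a::field^'n^'n"
  assumes "mat_parallel T e" "e ** e = e"
  shows "\<exists>Tg. T ** e = T \<and> e ** T = T \<and> T ** Tg = e \<and> Tg ** T = e \<and> e ** Tg = Tg \<and> Tg ** e = Tg"
proof -
  obtain R where R: "T ** R = e" and T: "T ** e = T" "e ** T = T" using par_props[OF assms] by blast
  let ?G = "e ** R ** e"
  have a: "T ** ?G = e" by (metis R T assms(2) matrix_mul_assoc)
  have b: "e ** ?G = ?G" "?G ** e = ?G" by (metis assms(2) matrix_mul_assoc)+
  have "?G ** T = e" using corner[OF assms(2) T b(2) b(1) a] .
  thus ?thesis using a b T by blast
qed

lemma idem_unique:
  fixes E1 E2 :: "'a::field^'n^'n"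
  assumes "E1 ** E1 = E1" "E2 ** E2 = E2" "mat_parallel E1 E2"
  shows "E1 = E2"
proof -
  have "E2 ** E1 = E1"
    using par_props[of E1 E2] assms by blast
  moreover have "E2 ** E1 = E2"
    using par_props[of E2 E1] assms unfolding mat_parallel_def by auto
  ultimately show ?thesis by simp
qed

lemma idem_of_eq:
  fixes P e :: "'a::field^'n^'n"
  assumes "e ** e = e" "P ** e = P" "e ** P = P" "P ** Q = e" "Q ** P = e"
  shows "idem_of P = e"
proof -
  have pe: "mat_parallel e P" using par_idem[OF assms(2-5)] unfolding mat_parallel_def by auto
  show ?thesis unfolding idem_of_def
  proof (rule the_equality)
    show "e ** e = e \<and> mat_im e = mat_im P \<and> mat_ker e = mat_ker P"
      using assms(1) pe unfolding mat_parallel_def by auto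
  next
    fix E assume "E ** E = E \<and> mat_im E = mat_im P \<and> mat_ker E = mat_ker P"
    thus "E = e" using idem_unique[of E e] assms(1) pe unfolding mat_parallel_def by auto
  qed
qed


lemma lassoc: "P ** Q = R \<Longrightarrow> X ** P ** Q = X ** R"
  by (metis matrix_mul_assoc)

lemma lassoc3: "P ** Q ** R = S \<Longrightarrow> X ** P ** Q ** R = X ** S"
  by (metis matrix_mul_assoc)

lemma key_alg:
  fixes e A T D D' C C' B Tg N :: "'a::field^'n^'n"
  assumes ee: "e ** e = e" and eA: "e ** A = A"
    and T: "T = D' ** B ** C'"
    and TTg: "T ** Tg = e" "Tg ** T = e" "e ** Tg = Tg" "Tg ** e = Tg"
    and BN: "B = D ** A ** C ** N"
  shows "B ** C' ** Tg ** D' ** B = B"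
proof -
  define P where "P = A ** C ** N ** C'"
  have TP: "T = D' ** D ** P" using T BN P_def by (simp add: matrix_mul_assoc)
  define K where "K = e ** D' ** D ** e"
  define Kr where "Kr = P ** Tg"
  have eP: "e ** P = P" unfolding P_def by (simp add: eA matrix_mul_assoc)
  have k1: "e ** Kr = Kr" unfolding Kr_def by (simp add: eP matrix_mul_assoc)
  have k2: "Kr ** e = Kr" unfolding Kr_def by (simp add: TTg(4) matrix_mul_assoc[symmetric])
  have k3: "K ** e = K" "e ** K = K" unfolding K_def by (simp_all add: ee lassoc[OF ee] matrix_mul_assoc)
  have DPT: "D' ** D ** P ** Tg = e" using TTg(1) by (simp add: TP)
  have "K ** Kr = e ** D' ** D ** (e ** P) ** Tg" by (simp add: K_def Kr_def matrix_mul_assoc)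
  also have "\<dots> = e ** (D' ** D ** P ** Tg)" by (simp add: eP matrix_mul_assoc)
  also have "\<dots> = e" by (simp add: DPT ee)
  finally have k4: "K ** Kr = e" .
  have KrK: "Kr ** K = e" using corner[OF ee k3 k2 k1 k4] .
  have "D' ** D ** e = D' ** D ** (Kr ** K)" by (simp add: KrK)
  also have "\<dots> = (D' ** D ** P ** Tg) ** K" by (simp add: Kr_def matrix_mul_assoc)
  also have "\<dots> = K" by (simp add: DPT k3)
  finally have DDe: "D' ** D ** e = K" .
  have DDe': "D' ** (D ** (e ** Y)) = K ** Y" for Y by (simp add: DDe[symmetric] matrix_mul_assoc)
  have "Kr ** D' ** B = Kr ** (D' ** D ** (e ** A)) ** C ** N" by (simp add: BN eA matrix_mul_assoc)
  also have "\<dots> = (Kr ** K) ** A ** C ** N" by (simp add: DDe' matrix_mul_assoc[symmetric])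
  also have "\<dots> = A ** C ** N" by (simp add: KrK eA)
  finally have ACN: "Kr ** D' ** B = A ** C ** N" .
  have "D ** Kr ** D' ** B = D ** (A ** C ** N)" by (simp add: ACN[symmetric] matrix_mul_assoc)
  also have "\<dots> = B" by (simp add: BN matrix_mul_assoc)
  finally have B2: "D ** Kr ** D' ** B = B" .
  have "D' ** B = (D' ** D ** (e ** A)) ** C ** N" by (simp add: BN eA matrix_mul_assoc)
  also have "\<dots> = K ** A ** C ** N" by (simp add: DDe' matrix_mul_assoc[symmetric])
  finally have DB: "D' ** B = K ** A ** C ** N" .
  have eDB: "e ** (D' ** B) = D' ** B"
    unfolding DB by (simp add: k3 matrix_mul_assoc)
  have "B ** C' ** Tg ** D' ** B = D ** Kr ** (D' ** B ** C') ** Tg ** D' ** B"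
    by (subst (1) B2[symmetric]) (simp add: matrix_mul_assoc)
  also have "\<dots> = D ** Kr ** ((T ** Tg) ** (D' ** B))" by (simp add: T[symmetric] matrix_mul_assoc)
  also have "\<dots> = D ** Kr ** D' ** B" using lassoc3[OF eDB[unfolded matrix_mul_assoc], of "D ** Kr"] by (simp add: TTg matrix_mul_assoc)
  also have "\<dots> = B" by (rule B2)
  finally show ?thesis .
qed


lemma par_sym: "mat_parallel P Q \<Longrightarrow> mat_parallel Q P"
  unfolding mat_parallel_def by auto

lemma par_trans: "mat_parallel P Q \<Longrightarrow> mat_parallel Q R \<Longrightarrow> mat_parallel P R"
  unfolding mat_parallel_def by auto

lemma F_alg:
  fixes e A A' T Tg U V :: "'a::field^'n^'n"
  assumes ee: "e ** e = e" and A: "e ** A = A" "A ** e = A" "A ** A' = e" "A' ** A = e" "e ** A' = A'" "A' ** e = A'"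
    and TT: "T ** e = T" "e ** T = T" "T ** Tg = e" "Tg ** T = e" "e ** Tg = Tg" "Tg ** e = Tg"
    and VU: "V ** U = T"
  shows "compl_pseudo_regular (U ** T ** V) \<and> idem_of (U ** T ** V) = U ** Tg ** V
     \<and> mat_parallel (U ** T ** V) (U ** A ** V) \<and> mat_parallel A (V ** (U ** T ** V) ** U)"
proof -
  note R = ee A TT VU ee[THEN rassoc] A[THEN rassoc] TT[THEN rassoc] VU[THEN rassoc]
  let ?F = "U ** T ** V" and ?E = "U ** Tg ** V" and ?G = "U ** Tg ** Tg ** Tg ** V"
  have 1: "?E ** ?E = ?E" "?E ** ?F = ?F" "?F ** ?E = ?F" "?F ** ?G = ?E" "?G ** ?F = ?E"
     "?E ** ?G = ?G" "?G ** ?E = ?G"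
    by (simp_all add: R matrix_mul_assoc[symmetric])
  have cpr: "compl_pseudo_regular ?F" using cpr_I[OF 1(1,2,3,4,5,6,7)] .
  have idem: "idem_of ?F = ?E" using idem_of_eq[OF 1(1,3,2,4,5)] .
  have p1: "mat_parallel ?F ?E" using par_idem[OF 1(3,2,4,5)] .
  let ?Q = "U ** Tg ** A' ** Tg ** V"
  have 2: "U ** A ** V ** ?E = U ** A ** V" "?E ** (U ** A ** V) = U ** A ** V"
      "U ** A ** V ** ?Q = ?E" "?Q ** (U ** A ** V) = ?E"
    by (simp_all add: R matrix_mul_assoc[symmetric])
  have p2: "mat_parallel (U ** A ** V) ?E" using par_idem[OF 2] .
  have p3: "mat_parallel A e" using par_idem[OF A(2,1,3,4)] .
  have 3: "V ** ?F ** U = T ** T ** T" by (simp add: R matrix_mul_assoc[symmetric])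
  have 4: "T ** T ** T ** e = T ** T ** T" "e ** (T ** T ** T) = T ** T ** T"
    "T ** T ** T ** (Tg ** Tg ** Tg) = e" "Tg ** Tg ** Tg ** (T ** T ** T) = e"
    by (simp_all add: R matrix_mul_assoc[symmetric])
  have p4: "mat_parallel (T ** T ** T) e" using par_idem[OF 4] .
  have p5: "mat_parallel ?F (U ** A ** V)" using par_trans[OF p1 par_sym[OF p2]] .
  have p6: "mat_parallel A (V ** ?F ** U)" unfolding 3 using par_trans[OF p3 par_sym[OF p4]] .
  show ?thesis using cpr idem p5 p6 by blast
qed


lemma S1_mult: "P \<in> gen_semigroup X \<union> {mat 1} \<Longrightarrow> Q \<in> gen_semigroup X \<union> {mat 1} \<Longrightarrow> P ** Q \<in> gen_semigroup X \<union> {mat 1}"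
  by (auto intro: gen_semigroup.mult)

lemma S1_multL: "P \<in> gen_semigroup X \<union> {mat 1} \<Longrightarrow> Q \<in> gen_semigroup X \<Longrightarrow> P ** Q \<in> gen_semigroup X"
  by (auto intro: gen_semigroup.mult)

lemma S1_multR: "P \<in> gen_semigroup X \<Longrightarrow> Q \<in> gen_semigroup X \<union> {mat 1} \<Longrightarrow> P ** Q \<in> gen_semigroup X"
  by (auto intro: gen_semigroup.mult)

lemma main:
  fixes X :: "('a::field^'n^'n) set" and A B B1 B2 :: "'a^'n^'n"
  assumes AS: "A \<in> gen_semigroup X" and cA: "compl_pseudo_regular A"
    and sim: "sim_rel (gen_semigroup X) A B"
    and B1: "B1 \<in> gen_semigroup X \<union> {mat 1}" and B2: "B2 \<in> gen_semigroup X \<union> {mat 1}"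
    and BB: "B = B1 ** B2"
  shows "\<exists>F. compl_pseudo_regular F \<and> sim_rel (gen_semigroup X) A F \<and> B1 ** idem_of F ** B2 = B"
proof -
  let ?S = "gen_semigroup X"
  obtain C D C' D' where CD: "C \<in> ?S \<union> {mat 1}" "D \<in> ?S \<union> {mat 1}" "C' \<in> ?S \<union> {mat 1}" "D' \<in> ?S \<union> {mat 1}"
    and p1: "mat_parallel B (D ** A ** C)" and p2: "mat_parallel A (D' ** B ** C')"
    and BS: "B \<in> ?S"
    using sim unfolding sim_rel_def by blast
  obtain e A' where A: "e ** e = e" "e ** A = A" "A ** e = A" "A ** A' = e" "A' ** A = e" "e ** A' = A'" "A' ** e = A'"
    using cpr_D[OF cA] by blast
  define T where "T = D' ** B ** C'"
  have pAe: "mat_parallel A e" using par_idem[OF A(3,2,4,5)] .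
  have pT: "mat_parallel T e" unfolding T_def using par_trans[OF par_sym[OF p2] pAe] .
  obtain Tg where TT: "T ** e = T" "e ** T = T" "T ** Tg = e" "Tg ** T = e" "e ** Tg = Tg" "Tg ** e = Tg"
    using par_ginv[OF pT A(1)] by blast
  have "mat_im B \<subseteq> mat_im (D ** A ** C)" using p1 unfolding mat_parallel_def by auto
  then obtain N where N: "B = D ** A ** C ** N" using factor by blast
  have key: "B ** C' ** Tg ** D' ** B = B"
    using key_alg[OF A(1,2) T_def TT(3,4,5,6) N] .
  define U where "U = B2 ** C'"
  define V where "V = D' ** B1"
  have VU: "V ** U = T" unfolding U_def V_def T_def BB by (simp add: matrix_mul_assoc)
  have FA: "compl_pseudo_regular (U ** T ** V) \<and> idem_of (U ** T ** V) = U ** Tg ** V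
     \<and> mat_parallel (U ** T ** V) (U ** A ** V) \<and> mat_parallel A (V ** (U ** T ** V) ** U)"
    using F_alg[OF A TT VU] .
  have US: "U \<in> ?S \<union> {mat 1}" unfolding U_def using S1_mult[OF B2 CD(3)] .
  have VS: "V \<in> ?S \<union> {mat 1}" unfolding V_def using S1_mult[OF CD(4) B1] .
  have TS: "T \<in> ?S" unfolding T_def using S1_multR[OF S1_multL[OF CD(4) BS] CD(3)] .
  have FS: "U ** T ** V \<in> ?S" using S1_multR[OF S1_multL[OF US TS] VS] .
  have "sim_rel ?S A (U ** T ** V)"
    unfolding sim_rel_def using AS FS US VS FA by blast
  moreover have "B1 ** idem_of (U ** T ** V) ** B2 = B"
  proof -
    have "B1 ** idem_of (U ** T ** V) ** B2 = B1 ** (B2 ** C' ** Tg ** D' ** B1) ** B2"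
      using FA unfolding U_def V_def by (simp add: matrix_mul_assoc)
    also have "\<dots> = B ** C' ** Tg ** D' ** B" unfolding BB by (simp add: matrix_mul_assoc)
    also have "\<dots> = B" using key .
    finally show ?thesis .
  qed
  ultimately show ?thesis using FA by blast
qed

theorem lemmaV11:
  fixes X :: "(('a::field_char_0)^'n^'n) set" and A B :: "'a^'n^'n"
  assumes "number_field TYPE('a)"
    and "lin_zariski_closed X"
    and "A \<in> gen_semigroup X"
    and "compl_pseudo_regular A"
    and "B \<in> sim_class (gen_semigroup X) A"
  shows "(\<exists>C D. compl_pseudo_regular C \<and> compl_pseudo_regular D
            \<and> C \<in> sim_class (gen_semigroup X) A \<and> D \<in> sim_class (gen_semigroup X) A
            \<and> B = idem_of D ** B \<and> B = B ** idem_of C)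
       \<and> (\<forall>B1 B2. B1 \<in> gen_semigroup X \<longrightarrow> B2 \<in> gen_semigroup X \<longrightarrow> B = B1 ** B2 \<longrightarrow>
            (\<exists>C. compl_pseudo_regular C \<and> C \<in> sim_class (gen_semigroup X) A
                 \<and> B1 ** B2 = B1 ** idem_of C ** B2))"
proof -
  have sim: "sim_rel (gen_semigroup X) A B" using assms(5) unfolding sim_class_def by simp
  hence BS: "B \<in> gen_semigroup X" unfolding sim_rel_def by simp
  obtain C where C: "compl_pseudo_regular C" "sim_rel (gen_semigroup X) A C" "B ** idem_of C ** mat 1 = B"
    using main[OF assms(3,4) sim, of B "mat 1"] BS by auto
  obtain D where D: "compl_pseudo_regular D" "sim_rel (gen_semigroup X) A D" "mat 1 ** idem_of D ** B = B"
    using main[OF assms(3,4) sim, of "mat 1" B] BS by auto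
  have part1: "\<exists>C D. compl_pseudo_regular C \<and> compl_pseudo_regular D
            \<and> C \<in> sim_class (gen_semigroup X) A \<and> D \<in> sim_class (gen_semigroup X) A
            \<and> B = idem_of D ** B \<and> B = B ** idem_of C"
    unfolding sim_class_def mem_Collect_eq
    by (rule exI[of _ C], rule exI[of _ D]) (use C D in simp)
  have part2: "\<forall>B1 B2. B1 \<in> gen_semigroup X \<longrightarrow> B2 \<in> gen_semigroup X \<longrightarrow> B = B1 ** B2 \<longrightarrow>
            (\<exists>C. compl_pseudo_regular C \<and> C \<in> sim_class (gen_semigroup X) A
                 \<and> B1 ** B2 = B1 ** idem_of C ** B2)"
  proof (intro allI impI)
    fix B1 B2 assume "B1 \<in> gen_semigroup X" "B2 \<in> gen_semigroup X" "B = B1 ** B2"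
    then obtain F where "compl_pseudo_regular F" "sim_rel (gen_semigroup X) A F" "B1 ** idem_of F ** B2 = B"
      using main[OF assms(3,4) sim, of B1 B2] by auto
    thus "\<exists>C. compl_pseudo_regular C \<and> C \<in> sim_class (gen_semigroup X) A
                 \<and> B1 ** B2 = B1 ** idem_of C ** B2"
      using \<open>B = B1 ** B2\<close> unfolding sim_class_def by auto
  qed
  show ?thesis using part1 part2 by blast
qed

end
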